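(* Let $G$ be a group, $N$ a normal subgroup, $m\in\mathbb{N}$ and $x,x_1,\dots,x_m\in N$ with $x_1\cdots x_m\in[G,N]$. Then \[\mathrm{scl}_{G,N}\Big(x+x^{-1}+\sum_{i=1}^mx_i\Big)=\mathrm{scl}_{G,N}\Big(\sum_{i=1}^mx_i\Big).\]
   Context: $\mathrm{cl}_{G,N}$ is the word length on $[G,N]$ with respect to $\{[g,x]=gxg^{-1}x^{-1}:g\in G,x\in N\}$. For a finite list $y_1,\dots,y_r\in N$ (repetitions allowed) with $y_1\cdots y_r\in[G,N]$, $\mathrm{cl}_{G,N}(y_1+\cdots+y_r)=\inf_{g_i\in G}\mathrm{cl}_{G,N}(y_1g_1y_2g_1^{-1}\cdots g_{r-1}y_rg_{r-1}^{-1})$ and $\mathrm{scl}_{G,N}(y_1+\cdots+y_r)=\lim_{n\to\infty}\frac1n\mathrm{cl}_{G,N}(y_1^n+\cdots+y_r^n)$. *)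

theory Defs
  imports Complex_Main "HOL-Algebra.Algebra"
begin

definition commutators :: "('a, 'b) monoid_scheme \<Rightarrow> 'a set \<Rightarrow> 'a set" where
  "commutators G N = {g \<otimes>\<^bsub>G\<^esub> x \<otimes>\<^bsub>G\<^esub> inv\<^bsub>G\<^esub> g \<otimes>\<^bsub>G\<^esub> inv\<^bsub>G\<^esub> x
                      | g x. g \<in> carrier G \<and> x \<in> N}"

definition comm_subgroup :: "('a, 'b) monoid_scheme \<Rightarrow> 'a set \<Rightarrow> 'a set" where
  "comm_subgroup G N = generate G (commutators G N)"

text \<open>Word length cl_{G,N}(z) on [G,N]: least number of commutators whose product is z.
  (The commutator set is closed under inverses, so no inverses are needed.)\<close>
definition cl :: "('a, 'b) monoid_scheme \<Rightarrow> 'a set \<Rightarrow> 'a \<Rightarrow> nat" where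
  "cl G N z = Inf {length cs | cs. set cs \<subseteq> commutators G N \<and> foldr (\<otimes>\<^bsub>G\<^esub>) cs \<one>\<^bsub>G\<^esub> = z}"

text \<open>y_1 (g_1 y_2 g_1^-1) ... (g_{r-1} y_r g_{r-1}^-1); the element ys!i (i \<ge> 1) is
  conjugated by g i, the element ys!0 is not conjugated.\<close>
definition chain_prod :: "('a, 'b) monoid_scheme \<Rightarrow> (nat \<Rightarrow> 'a) \<Rightarrow> 'a list \<Rightarrow> 'a" where
  "chain_prod G g ys = foldr (\<otimes>\<^bsub>G\<^esub>)
     (map (\<lambda>i. if i = 0 then ys ! i else g i \<otimes>\<^bsub>G\<^esub> ys ! i \<otimes>\<^bsub>G\<^esub> inv\<^bsub>G\<^esub> (g i)) [0..<length ys])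
     \<one>\<^bsub>G\<^esub>"

definition cl_chain :: "('a, 'b) monoid_scheme \<Rightarrow> 'a set \<Rightarrow> 'a list \<Rightarrow> nat" where
  "cl_chain G N ys = Inf {cl G N (chain_prod G g ys) | g. \<forall>i. g i \<in> carrier G}"

definition scl_chain :: "('a, 'b) monoid_scheme \<Rightarrow> 'a set \<Rightarrow> 'a list \<Rightarrow> real" where
  "scl_chain G N ys = lim (\<lambda>n. real (cl_chain G N (map (\<lambda>y. y [^]\<^bsub>G\<^esub> n) ys)) / real n)"

end

theory Submission
  imports Defs
begin

definition cprod :: "('a, 'b) monoid_scheme \<Rightarrow> (nat \<Rightarrow> 'a) \<Rightarrow> 'a list \<Rightarrow> 'a" where
  "cprod G f ys = foldr (\<otimes>\<^bsub>G\<^esub>)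
     (map (\<lambda>i. f i \<otimes>\<^bsub>G\<^esub> ys ! i \<otimes>\<^bsub>G\<^esub> inv\<^bsub>G\<^esub> (f i)) [0..<length ys]) \<one>\<^bsub>G\<^esub>"

lemma cprod_Nil: "cprod G f [] = \<one>\<^bsub>G\<^esub>"
  by (simp add: cprod_def)

lemma cprod_Cons: "cprod G f (y # ys) =
   (f 0 \<otimes>\<^bsub>G\<^esub> y \<otimes>\<^bsub>G\<^esub> inv\<^bsub>G\<^esub> (f 0)) \<otimes>\<^bsub>G\<^esub> cprod G (\<lambda>i. f (Suc i)) ys"
proof -
  have "[0..<length (y#ys)] = 0 # map Suc [0..<length ys]"
    by (simp add: upt_conv_Cons map_Suc_upt del: upt_Suc)
  then show ?thesis by (simp add: cprod_def o_def)
qed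

context group
begin

lemma inv_cancel_l: "x \<in> carrier G \<Longrightarrow> y \<in> carrier G \<Longrightarrow> inv x \<otimes> (x \<otimes> y) = y"
  by (simp add: m_assoc[symmetric])

lemma inv_cancel_r: "x \<in> carrier G \<Longrightarrow> y \<in> carrier G \<Longrightarrow> x \<otimes> (inv x \<otimes> y) = y"
  by (simp add: m_assoc[symmetric])

lemma cprod_closed: "(\<And>i. f i \<in> carrier G) \<Longrightarrow> set ys \<subseteq> carrier G \<Longrightarrow> cprod G f ys \<in> carrier G"
  by (induction ys arbitrary: f) (auto simp: cprod_Nil cprod_Cons)

lemma cprod_conj:
  assumes "k \<in> carrier G" "\<And>i. f i \<in> carrier G" "set ys \<subseteq> carrier G"
  shows "cprod G (\<lambda>i. k \<otimes> f i) ys = k \<otimes> cprod G f ys \<otimes> inv k"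
  using assms(2,3)
proof (induction ys arbitrary: f)
  case Nil
  then show ?case using assms(1) by (simp add: cprod_Nil)
next
  case (Cons y ys)
  have R: "cprod G (\<lambda>i. f (Suc i)) ys \<in> carrier G" using Cons.prems by (intro cprod_closed) auto
  have "cprod G (\<lambda>i. k \<otimes> f i) (y # ys) = (k \<otimes> f 0 \<otimes> y \<otimes> inv (k \<otimes> f 0)) \<otimes> (k \<otimes> cprod G (\<lambda>i. f (Suc i)) ys \<otimes> inv k)"
    using Cons by (simp add: cprod_Cons)
  also have "\<dots> = k \<otimes> ((f 0 \<otimes> y \<otimes> inv (f 0)) \<otimes> cprod G (\<lambda>i. f (Suc i)) ys) \<otimes> inv k"
    using Cons.prems R assms(1) by (simp add: inv_mult_group m_assoc inv_cancel_l)
  finally show ?case by (simp add: cprod_Cons)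
qed

lemma chain_prod_cprod:
  assumes "set ys \<subseteq> carrier G"
  shows "chain_prod G g ys = cprod G (g(0:=\<one>)) ys"
  unfolding chain_prod_def cprod_def
  apply (rule arg_cong[where f="\<lambda>l. foldr (\<otimes>) l \<one>"])
  apply (rule map_cong, simp)
  using assms by (auto simp: subset_iff)

lemma comm_carrier: "N \<subseteq> carrier G \<Longrightarrow> c \<in> commutators G N \<Longrightarrow> c \<in> carrier G"
  unfolding commutators_def by auto

lemma comm_inv: "N \<subseteq> carrier G \<Longrightarrow> N \<lhd> G \<Longrightarrow> c \<in> commutators G N \<Longrightarrow> inv c \<in> commutators G N"
proof -
  assume N: "N \<subseteq> carrier G" "N \<lhd> G" and c: "c \<in> commutators G N"
  then obtain g x where gx: "g \<in> carrier G" "x \<in> N" "c = g \<otimes> x \<otimes> inv g \<otimes> inv x"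
    unfolding commutators_def by auto
  have xc: "x \<in> carrier G" using gx N by auto
  have "inv c = inv g \<otimes> (g \<otimes> x \<otimes> inv g) \<otimes> inv (inv g) \<otimes> inv (g \<otimes> x \<otimes> inv g)"
    using gx xc by (simp add: inv_mult_group m_assoc inv_cancel_l)
  moreover have "g \<otimes> x \<otimes> inv g \<in> N" using N gx by (simp add: normal.inv_op_closed2)
  ultimately show ?thesis unfolding commutators_def using gx by blast
qed

lemma comm_conj: "N \<subseteq> carrier G \<Longrightarrow> N \<lhd> G \<Longrightarrow> c \<in> commutators G N \<Longrightarrow> k \<in> carrier G \<Longrightarrow>
   k \<otimes> c \<otimes> inv k \<in> commutators G N"
proof -
  assume N: "N \<subseteq> carrier G" "N \<lhd> G" and c: "c \<in> commutators G N" and k: "k \<in> carrier G"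
  then obtain g x where gx: "g \<in> carrier G" "x \<in> N" "c = g \<otimes> x \<otimes> inv g \<otimes> inv x"
    unfolding commutators_def by auto
  have xc: "x \<in> carrier G" using gx N by auto
  have "k \<otimes> c \<otimes> inv k = (k \<otimes> g \<otimes> inv k) \<otimes> (k \<otimes> x \<otimes> inv k) \<otimes> inv (k \<otimes> g \<otimes> inv k) \<otimes> inv (k \<otimes> x \<otimes> inv k)"
    using gx xc k by (simp add: inv_mult_group m_assoc inv_cancel_l)
  moreover have "k \<otimes> x \<otimes> inv k \<in> N" using N gx k by (simp add: normal.inv_op_closed2)
  ultimately show ?thesis unfolding commutators_def using gx k by blast
qed

definition Ls :: "'a set \<Rightarrow> 'a \<Rightarrow> nat set" where
  "Ls N z = {length cs | cs. set cs \<subseteq> commutators G N \<and> foldr (\<otimes>) cs \<one> = z}"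

lemma cl_Ls: "cl G N z = Inf (Ls N z)"
  unfolding cl_def Ls_def by simp

lemma foldr_conj: "set cs \<subseteq> carrier G \<Longrightarrow> k \<in> carrier G \<Longrightarrow>
   foldr (\<otimes>) (map (\<lambda>c. k \<otimes> c \<otimes> inv k) cs) \<one> = k \<otimes> foldr (\<otimes>) cs \<one> \<otimes> inv k"
proof (induction cs)
  case Nil then show ?case by simp
next
  case (Cons c cs)
  have R: "foldr (\<otimes>) cs \<one> \<in> carrier G" using Cons.prems by (induction cs) auto
  show ?case using Cons R by (simp add: m_assoc inv_cancel_l)
qed

lemma Ls_conj_sub: "N \<subseteq> carrier G \<Longrightarrow> N \<lhd> G \<Longrightarrow> k \<in> carrier G \<Longrightarrow> Ls N z \<subseteq> Ls N (k \<otimes> z \<otimes> inv k)"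
proof
  fix l assume N: "N \<subseteq> carrier G" "N \<lhd> G" and k: "k \<in> carrier G" and "l \<in> Ls N z"
  then obtain cs where cs: "l = length cs" "set cs \<subseteq> commutators G N" "foldr (\<otimes>) cs \<one> = z"
    unfolding Ls_def by auto
  have cc: "set cs \<subseteq> carrier G" using cs N comm_carrier by blast
  have "set (map (\<lambda>c. k \<otimes> c \<otimes> inv k) cs) \<subseteq> commutators G N" using cs N k comm_conj by auto
  moreover have "foldr (\<otimes>) (map (\<lambda>c. k \<otimes> c \<otimes> inv k) cs) \<one> = k \<otimes> z \<otimes> inv k"
    using foldr_conj[OF cc k] cs by simp
  ultimately show "l \<in> Ls N (k \<otimes> z \<otimes> inv k)" unfolding Ls_def using cs(1)
    by (intro CollectI exI[where x="map (\<lambda>c. k \<otimes> c \<otimes> inv k) cs"]) simp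
qed

lemma cl_conj: "N \<subseteq> carrier G \<Longrightarrow> N \<lhd> G \<Longrightarrow> k \<in> carrier G \<Longrightarrow> z \<in> carrier G \<Longrightarrow>
  cl G N (k \<otimes> z \<otimes> inv k) = cl G N z"
proof -
  assume a: "N \<subseteq> carrier G" "N \<lhd> G" "k \<in> carrier G" "z \<in> carrier G"
  have "Ls N (k \<otimes> z \<otimes> inv k) \<subseteq> Ls N (inv k \<otimes> (k \<otimes> z \<otimes> inv k) \<otimes> inv (inv k))"
    using a by (intro Ls_conj_sub) auto
  also have "inv k \<otimes> (k \<otimes> z \<otimes> inv k) \<otimes> inv (inv k) = z"
    using a by (simp add: m_assoc inv_cancel_l)
  finally have "Ls N (k \<otimes> z \<otimes> inv k) = Ls N z" using Ls_conj_sub[OF a(1-3), of z] by blast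
  then show ?thesis by (simp add: cl_Ls)
qed

lemma cl_mult: "N \<subseteq> carrier G \<Longrightarrow> N \<lhd> G \<Longrightarrow> c \<in> commutators G N \<Longrightarrow> z \<in> carrier G \<Longrightarrow>
  cl G N z \<le> cl G N (c \<otimes> z) + 1"
proof -
  assume a: "N \<subseteq> carrier G" "N \<lhd> G" "c \<in> commutators G N" "z \<in> carrier G"
  have cc: "c \<in> carrier G" using a comm_carrier by blast
  show ?thesis
  proof (cases "Ls N (c \<otimes> z) = {}")
    case True
    have "Ls N z = {}"
    proof (rule ccontr)
      assume "Ls N z \<noteq> {}"
      then obtain cs where cs: "set cs \<subseteq> commutators G N" "foldr (\<otimes>) cs \<one> = z"
        unfolding Ls_def by auto
      then have "length (c # cs) \<in> Ls N (c \<otimes> z)" unfolding Ls_def using a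
        by (intro CollectI exI[where x="c # cs"]) simp
      then show False using True by simp
    qed
    then show ?thesis using True by (simp add: cl_Ls)
  next
    case False
    then have "Inf (Ls N (c \<otimes> z)) \<in> Ls N (c \<otimes> z)" by (rule Inf_nat_def1)
    then obtain cs where cs: "Inf (Ls N (c \<otimes> z)) = length cs" "set cs \<subseteq> commutators G N"
       "foldr (\<otimes>) cs \<one> = c \<otimes> z" unfolding Ls_def by auto
    have "foldr (\<otimes>) (inv c # cs) \<one> = z" using cs cc a by (simp add: inv_cancel_l)
    moreover have "set (inv c # cs) \<subseteq> commutators G N" using cs a comm_inv by auto
    ultimately have "length (inv c # cs) \<in> Ls N z" unfolding Ls_def by blast
    then have "Inf (Ls N z) \<le> length (inv c # cs)" by (rule cInf_lower) simp
    then show ?thesis using cs by (simp add: cl_Ls)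
  qed
qed


lemma cl_chain_bounds:
  assumes N: "N \<lhd> G" and a: "a \<in> N" and ys: "set ys \<subseteq> N"
  shows "cl_chain G N (a # inv a # ys) \<le> cl_chain G N ys"
    and "cl_chain G N ys \<le> cl_chain G N (a # inv a # ys) + 1"
proof -
  have NC: "N \<subseteq> carrier G" using N normal_imp_subgroup subgroup.subset by blast
  have ac: "a \<in> carrier G" using a NC by auto
  have ysc: "set ys \<subseteq> carrier G" using ys NC by auto
  have abc: "set (a # inv a # ys) \<subseteq> carrier G" using ac ysc by auto
  define SA where "SA = {cl G N (chain_prod G g (a # inv a # ys)) | g. \<forall>i. g i \<in> carrier G}"
  define SB where "SB = {cl G N (chain_prod G g ys) | g. \<forall>i. g i \<in> carrier G}"
  have A: "cl_chain G N (a # inv a # ys) = Inf SA" unfolding SA_def cl_chain_def by simp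
  have B: "cl_chain G N ys = Inf SB" unfolding SB_def cl_chain_def by simp
  have SBne: "SB \<noteq> {}" unfolding SB_def by (auto intro: exI[where x="\<lambda>_. \<one>"])
  have SAne: "SA \<noteq> {}" unfolding SA_def by (auto intro: exI[where x="\<lambda>_. \<one>"])
  have expand: "chain_prod G g (a # inv a # ys) =
      a \<otimes> (g 1 \<otimes> inv a \<otimes> inv (g 1)) \<otimes> cprod G (\<lambda>i. g (Suc (Suc i))) ys"
    if g: "\<forall>i. g i \<in> carrier G" for g
  proof -
    have "chain_prod G g (a # inv a # ys) = cprod G (g(0:=\<one>)) (a # inv a # ys)"
      using abc by (rule chain_prod_cprod)
    also have "\<dots> = a \<otimes> ((g 1 \<otimes> inv a \<otimes> inv (g 1)) \<otimes> cprod G (\<lambda>i. g (Suc (Suc i))) ys)"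
      using ac by (simp add: cprod_Cons)
    also have "\<dots> = a \<otimes> (g 1 \<otimes> inv a \<otimes> inv (g 1)) \<otimes> cprod G (\<lambda>i. g (Suc (Suc i))) ys"
      using g ac ysc by (simp add: m_assoc cprod_closed)
    finally show ?thesis .
  qed
  have "SB \<subseteq> SA"
  proof
    fix v assume "v \<in> SB"
    then obtain h where h: "\<forall>i. h i \<in> carrier G" "v = cl G N (chain_prod G h ys)"
      unfolding SB_def by auto
    define g where "g = (\<lambda>i. if i \<le> 2 then \<one> else h (i - 2))"
    have g: "\<forall>i. g i \<in> carrier G" using h unfolding g_def by auto
    have "(\<lambda>i. g (Suc (Suc i))) = h(0:=\<one>)" unfolding g_def by (auto simp: fun_eq_iff)
    then have "chain_prod G g (a # inv a # ys) = a \<otimes> (inv a) \<otimes> chain_prod G h ys"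
      using expand[OF g] ac by (simp add: g_def chain_prod_cprod[OF ysc])
    also have "\<dots> = chain_prod G h ys"
      using ac h ysc by (simp add: chain_prod_cprod cprod_closed)
    finally show "v \<in> SA" unfolding SA_def using g h by (intro CollectI exI[where x=g]) simp
  qed
  then show "cl_chain G N (a # inv a # ys) \<le> cl_chain G N ys"
    unfolding A B using Inf_nat_def1[OF SBne] by (intro cInf_lower) auto
  obtain g where g: "\<forall>i. g i \<in> carrier G" "Inf SA = cl G N (chain_prod G g (a # inv a # ys))"
    using Inf_nat_def1[OF SAne] unfolding SA_def by auto
  define f where "f = (\<lambda>i. g (Suc (Suc i)))"
  have fc: "\<And>i. f i \<in> carrier G" using g unfolding f_def by auto
  define c where "c = a \<otimes> g 1 \<otimes> inv a \<otimes> inv (g 1)"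
  have g1: "g 1 \<in> carrier G" using g by auto
  have "inv c = g 1 \<otimes> a \<otimes> inv (g 1) \<otimes> inv a"
    unfolding c_def using g1 ac by (simp add: inv_mult_group m_assoc)
  then have "inv c \<in> commutators G N" unfolding commutators_def using g1 a by blast
  then have "inv (inv c) \<in> commutators G N" using comm_inv NC N by blast
  then have cC: "c \<in> commutators G N" unfolding c_def using g1 ac by simp
  have Rc: "cprod G f ys \<in> carrier G" using fc ysc by (rule cprod_closed)
  have e: "chain_prod G g (a # inv a # ys) = c \<otimes> cprod G f ys"
    using expand[OF g(1)] g1 ac unfolding c_def f_def by (simp add: m_assoc)
  define h where "h = (\<lambda>i. inv (f 0) \<otimes> f i)"
  have hc: "\<forall>i. h i \<in> carrier G" using fc unfolding h_def by auto
  have h0: "h(0:=\<one>) = h" using fc unfolding h_def by (auto simp: fun_eq_iff)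
  have "cprod G f ys = cprod G (\<lambda>i. f 0 \<otimes> h i) ys"
    using fc unfolding h_def by (simp add: inv_cancel_r)
  also have "\<dots> = f 0 \<otimes> cprod G h ys \<otimes> inv (f 0)"
    using fc hc ysc by (intro cprod_conj) auto
  also have "cprod G h ys = chain_prod G h ys" using h0 chain_prod_cprod[OF ysc, of h] by simp
  finally have "cl G N (cprod G f ys) = cl G N (chain_prod G h ys)"
    using fc hc ysc NC N by (simp add: cl_conj chain_prod_cprod cprod_closed h0)
  moreover have "Inf SB \<le> cl G N (chain_prod G h ys)"
    unfolding SB_def using hc by (intro cInf_lower) auto
  moreover have "cl G N (cprod G f ys) \<le> cl G N (c \<otimes> cprod G f ys) + 1"
    using cl_mult NC N cC Rc by blast
  ultimately show "cl_chain G N ys \<le> cl_chain G N (a # inv a # ys) + 1"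
    unfolding A B using g(2) e by simp
qed


lemma pow_in_normal: "N \<lhd> G \<Longrightarrow> y \<in> N \<Longrightarrow> y [^] (n::nat) \<in> N"
proof (induction n)
  case 0 then show ?case using normal_imp_subgroup subgroup.one_closed by fastforce
next
  case (Suc n)
  have "subgroup N G" using Suc.prems normal_imp_subgroup by blast
  then show ?case using Suc by (simp add: subgroup.m_closed)
qed

lemma seq_bounds:
  fixes n :: nat
  assumes N: "N \<lhd> G" and x: "x \<in> N" and xs: "set xs \<subseteq> N"
  shows "cl_chain G N (map (\<lambda>y. y [^] n) (x # inv x # xs)) \<le> cl_chain G N (map (\<lambda>y. y [^] n) xs)"
    and "cl_chain G N (map (\<lambda>y. y [^] n) xs) \<le> cl_chain G N (map (\<lambda>y. y [^] n) (x # inv x # xs)) + 1"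
proof -
  have NC: "N \<subseteq> carrier G" using N normal_imp_subgroup subgroup.subset by blast
  have e: "map (\<lambda>y. y [^] n) (x # inv x # xs) = x [^] n # inv (x [^] n) # map (\<lambda>y. y [^] n) xs"
    using x NC nat_pow_inv[of x n] by auto
  have a: "x [^] n \<in> N" using pow_in_normal N x by blast
  have ys: "set (map (\<lambda>y. y [^] n) xs) \<subseteq> N" using pow_in_normal N xs by auto
  show "cl_chain G N (map (\<lambda>y. y [^] n) (x # inv x # xs)) \<le> cl_chain G N (map (\<lambda>y. y [^] n) xs)"
    unfolding e by (rule cl_chain_bounds(1)[OF N a ys])
  show "cl_chain G N (map (\<lambda>y. y [^] n) xs) \<le> cl_chain G N (map (\<lambda>y. y [^] n) (x # inv x # xs)) + 1"
    unfolding e by (rule cl_chain_bounds(2)[OF N a ys])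
qed

end

theorem lemma5p14:
  fixes G (structure) and N :: "'a set" and x :: 'a and xs :: "'a list"
  assumes "group G" and "N \<lhd> G"
    and "x \<in> N" and "set xs \<subseteq> N"
    and "foldr (\<otimes>) xs \<one> \<in> comm_subgroup G N"
  shows "scl_chain G N (x # inv x # xs) = scl_chain G N xs"
proof -
  define A where "A = (\<lambda>n. real (cl_chain G N (map (\<lambda>y. y [^] n) (x # inv x # xs))) / real n)"
  define B where "B = (\<lambda>n. real (cl_chain G N (map (\<lambda>y. y [^] n) xs)) / real n)"
  have d: "(\<lambda>n. A n - B n) \<longlonglongrightarrow> 0"
  proof (rule real_tendsto_sandwich[where f="\<lambda>n. - (1 / real n)" and h="\<lambda>n. 0"])
    show "\<forall>\<^sub>F n in sequentially. - (1 / real n) \<le> A n - B n"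
    proof (rule always_eventually, rule allI)
      fix n :: nat
      have "real (cl_chain G N (map (\<lambda>y. y [^] n) xs)) \<le> real (cl_chain G N (map (\<lambda>y. y [^] n) (x # inv x # xs))) + 1"
        using group.seq_bounds(2)[OF assms(1-4), of n] by linarith
      then show "- (1 / real n) \<le> A n - B n" unfolding A_def B_def
        by (cases "n = 0") (auto simp: field_simps diff_divide_distrib[symmetric])
    qed
    show "\<forall>\<^sub>F n in sequentially. A n - B n \<le> 0"
    proof (rule always_eventually, rule allI)
      fix n :: nat
      have "real (cl_chain G N (map (\<lambda>y. y [^] n) (x # inv x # xs))) \<le> real (cl_chain G N (map (\<lambda>y. y [^] n) xs))"
        using group.seq_bounds(1)[OF assms(1-4), of n] by linarith
      then show "A n - B n \<le> 0" unfolding A_def B_def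
        by (cases "n = 0") (auto simp: field_simps diff_divide_distrib[symmetric])
    qed
    show "(\<lambda>n. - (1 / real n)) \<longlonglongrightarrow> 0" using tendsto_minus[OF lim_const_over_n[of 1]] by simp
  qed simp
  have "(\<lambda>L. A \<longlonglongrightarrow> L) = (\<lambda>L. B \<longlonglongrightarrow> L)"
  proof (rule ext, rule iffI)
    fix L assume "A \<longlonglongrightarrow> L" then show "B \<longlonglongrightarrow> L" using d by (rule Lim_transform2)
  next
    fix L assume "B \<longlonglongrightarrow> L" then show "A \<longlonglongrightarrow> L" using d by (rule Lim_transform)
  qed
  then have "lim A = lim B" unfolding lim_def by simp
  then show ?thesis unfolding scl_chain_def A_def B_def .
qed

end
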